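(* Let $\sigma^2>0$, $0<\dot R<\frac{1}{2\sigma^2}$ and $0<\epsilon<1$. For each integer $\mathsf{M}\ge 2$, set $\xi=\sqrt{\log\mathsf{M}/\dot R}$ and $\Upsilon=\xi-\sigma Q^{-1}(\epsilon)$. Consider the pulse-position modulation scheme of block length $n=\mathsf{M}$ in which message $m\in\{1,\dots,\mathsf{M}\}$ is mapped to $x_k(m)=\xi$ if $k=m$ and $x_k(m)=0$ otherwise (so the energy is $\mathsf{E}=\xi^2=\log\mathsf{M}/\dot R$); the one-bit quantizer with region $\{\tilde y\ge\Upsilon\}$ is used, i.e. $Y_k=1$ if $x_k+Z_k\ge\Upsilon$ and $Y_k=-1$ otherwise, with $Z_k$ i.i.d. $\mathcal{N}(0,\sigma^2)$; and the decoder outputs $\hat M=m$ if $Y_m=1$ and $Y_k=-1$ for all $k\neq m$, and declares an error otherwise. Then the error probability satisfies $$\Pr(\hat M\neq M)\le (\mathsf{M}-1)\,Q\!\left(\frac{\xi-\sigma Q^{-1}(\epsilon)}{\sigma}\right)+\epsilon,$$ and $\limsup_{\mathsf{M}\to\infty}\Pr(\hat M\neq M)\le\epsilon$. Consequently every rate per unit-energy $\dot R<\frac{1}{2\sigma^2}$ is achievable by such PPM schemes with threshold quantizers.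
   Context: $Q(x)=\frac{1}{\sqrt{2\pi}}\int_x^\infty e^{-t^2/2}\,dt$ and $Q^{-1}$ is its inverse; $\log$ is natural. The message $M$ is uniform on $\{1,\dots,\mathsf{M}\}$. A rate per unit-energy $\dot R$ is achievable if for every $\epsilon'>0$ there exist an encoder with $\sum_k x_k^2\le\mathsf{E}$ for every message, a quantization region and a decoder with $\log\mathsf{M}/\mathsf{E}>\dot R-\epsilon'$ and $\Pr(\hat M\neq M)\to0$ as $\mathsf{E}\to\infty$. *)

theory Defs
  imports "HOL-Probability.Probability"
begin

text \<open>Gaussian tail function Q and its inverse (Q is a strictly decreasing bijection
  from the reals onto (0,1)).\<close>
definition Qfun :: "real \<Rightarrow> real" where
  "Qfun x = (1 / sqrt (2 * pi)) * (LBINT t:{x..}. exp (- (t^2) / 2))"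

definition Qinv :: "real \<Rightarrow> real" where
  "Qinv e = (THE x. Qfun x = e)"

text \<open>i.i.d. N(0, sigma^2) noise on the M channel uses k = 1..M
  (normal_density mu s uses s as the standard deviation).\<close>
definition noise :: "real \<Rightarrow> nat \<Rightarrow> (nat \<Rightarrow> real) measure" where
  "noise \<sigma> M = PiM {1..M} (\<lambda>_. density lborel (normal_density 0 \<sigma>))"

definition ppm_cw :: "real \<Rightarrow> nat \<Rightarrow> nat \<Rightarrow> real" where
  "ppm_cw \<xi> m k = (if k = m then \<xi> else 0)"

definition quant :: "real \<Rightarrow> (nat \<Rightarrow> real) \<Rightarrow> (nat \<Rightarrow> real) \<Rightarrow> nat \<Rightarrow> int" where
  "quant \<Upsilon> x z k = (if x k + z k \<ge> \<Upsilon> then 1 else -1)"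

definition ppm_dec :: "nat \<Rightarrow> (nat \<Rightarrow> int) \<Rightarrow> nat option" where
  "ppm_dec M y =
     (if \<exists>m\<in>{1..M}. y m = 1 \<and> (\<forall>k\<in>{1..M}. k \<noteq> m \<longrightarrow> y k = -1)
      then Some (SOME m. m \<in> {1..M} \<and> y m = 1 \<and> (\<forall>k\<in>{1..M}. k \<noteq> m \<longrightarrow> y k = -1))
      else None)"

text \<open>Error probability Pr(hat M <> M) for M uniform on {1..M}, PPM amplitude xi,
  threshold Upsilon, noise std sigma (law of total probability over the uniform message).\<close>
definition ppm_err :: "real \<Rightarrow> nat \<Rightarrow> real \<Rightarrow> real \<Rightarrow> real" where
  "ppm_err \<sigma> M \<xi> \<Upsilon> =
     (1 / real M) * (\<Sum>m\<in>{1..M}.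
        measure (noise \<sigma> M)
          {z \<in> space (noise \<sigma> M). ppm_dec M (quant \<Upsilon> (ppm_cw \<xi> m) z) \<noteq> Some m})"

definition ppm_xi :: "real \<Rightarrow> nat \<Rightarrow> real" where
  "ppm_xi R M = sqrt (ln (real M) / R)"

text \<open>Achievability of rate per unit energy R by PPM schemes with threshold quantizers:
  for every eps' > 0 there is a family (indexed by M) of PPM schemes with amplitudes xi_M
  (energy E_M = xi_M^2, so every codeword meets the energy constraint with equality) and
  thresholds Upsilon_M such that log M / E_M > R - eps', E_M \<rightarrow> \<infinity>, and the error
  probability tends to 0.\<close>
definition ppm_achievable :: "real \<Rightarrow> real \<Rightarrow> bool" where
  "ppm_achievable \<sigma> R \<longleftrightarrow>
     (\<forall>\<epsilon>'>0. \<exists>\<xi>s \<Upsilon>s. (\<forall>M\<ge>2. \<xi>s M > 0 \<and> ln (real M) / (\<xi>s M)^2 > R - \<epsilon>')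
        \<and> filterlim (\<lambda>M. (\<xi>s M)^2) at_top sequentially
        \<and> (\<lambda>M. ppm_err \<sigma> M (\<xi>s M) (\<Upsilon>s M)) \<longlonglongrightarrow> 0)"

end

theory Submission
  imports Defs
begin

abbreviation "Nm \<equiv> density lborel (normal_density 0 1)"

lemma Nm_prob: "prob_space Nm" by (rule prob_space_normal_density) simp

lemma scale_D:
  fixes c :: real
  assumes c: "c \<noteq> 0" and A[measurable]: "A \<in> sets borel"
  shows "emeasure (density lborel (normal_density 0 \<bar>c\<bar>)) A = emeasure Nm {x. c * x \<in> A}"
proof -
  have mA: "{x. c * x \<in> A} \<in> sets borel" by measurable
  have "emeasure (density lborel (normal_density 0 \<bar>c\<bar>)) A
      = (\<integral>\<^sup>+ x. ennreal (normal_density 0 \<bar>c\<bar> x) * indicator A x \<partial>lborel)"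
    by (rule emeasure_density) auto
  also have "\<dots> = \<bar>c\<bar> * (\<integral>\<^sup>+ x. ennreal (normal_density 0 \<bar>c\<bar> (0 + c * x)) * indicator A (0 + c * x) \<partial>lborel)"
    by (rule nn_integral_real_affine) (auto simp: c)
  also have "\<dots> = (\<integral>\<^sup>+ x. ennreal \<bar>c\<bar> * (ennreal (normal_density 0 \<bar>c\<bar> (c * x)) * indicator A (c * x)) \<partial>lborel)"
    by (subst nn_integral_cmult) auto
  also have "\<dots> = (\<integral>\<^sup>+ x. ennreal (normal_density 0 1 x) * indicator {x. c * x \<in> A} x \<partial>lborel)"
  proof (rule nn_integral_cong)
    fix x
    have "\<bar>c\<bar> * normal_density 0 \<bar>c\<bar> (c * x) = normal_density 0 1 x"
      using c by (simp add: normal_density_def real_sqrt_mult power_mult_distrib field_simps)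
    then show "ennreal \<bar>c\<bar> * (ennreal (normal_density 0 \<bar>c\<bar> (c * x)) * indicator A (c * x))
        = ennreal (normal_density 0 1 x) * indicator {x. c * x \<in> A} x"
      by (auto simp: indicator_def ennreal_mult'[symmetric] mult.assoc)
  qed
  also have "\<dots> = emeasure Nm {x. c * x \<in> A}"
    by (rule emeasure_density[symmetric]) (auto simp: mA)
  finally show ?thesis .
qed

interpretation N: real_distribution Nm
  by (simp add: real_distribution_def real_distribution_axioms_def Nm_prob)

lemma Nm_single: "measure Nm {x} = 0"
proof -
  have "emeasure Nm {x} = (\<integral>\<^sup>+ t. ennreal (normal_density 0 1 t) * indicator {x} t \<partial>lborel)"
    by (rule emeasure_density) auto
  also have "\<dots> = (\<integral>\<^sup>+ t. (0::ennreal) \<partial>(lborel::real measure))"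
    by (rule nn_integral_cong_AE) (use AE_lborel_singleton[of x] in \<open>auto elim!: eventually_mono\<close>)
  finally show ?thesis by (simp add: measure_def)
qed

lemma Qfun_measure: "Qfun x = measure Nm {x..}"
proof -
  have "measure Nm {x..} = integral\<^sup>L Nm (indicator {x..})" by simp
  also have "\<dots> = integral\<^sup>L lborel (\<lambda>t. normal_density 0 1 t *\<^sub>R indicator {x..} t)"
    by (rule integral_density) auto
  also have "\<dots> = integral\<^sup>L lborel (\<lambda>t. (1 / sqrt (2 * pi)) * (indicator {x..} t *\<^sub>R exp (- (t^2) / 2)))"
    by (rule Bochner_Integration.integral_cong) (auto simp: std_normal_density_def)
  also have "\<dots> = Qfun x"
    unfolding Qfun_def set_lebesgue_integral_def by (rule integral_mult_right_zero)
  finally show ?thesis by simp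
qed

lemma Qfun_cdf: "Qfun x = 1 - cdf Nm x"
proof -
  have "{x..} = {x} \<union> {x<..}" by auto
  then have "measure Nm {x..} = measure Nm {x} + measure Nm {x<..}"
    using N.finite_measure_Union[of "{x}" "{x<..}"] by auto
  also have "\<dots> = measure Nm {x<..}" by (simp add: Nm_single)
  also have "{x<..} = UNIV - {..x}" by auto
  also have "measure Nm (UNIV - {..x}) = 1 - cdf Nm x"
    using N.prob_compl[of "{..x}"] by (simp add: cdf_def)
  finally show ?thesis by (simp add: Qfun_measure)
qed

lemma Qfun_cont: "isCont Qfun x"
proof -
  have "isCont (cdf Nm) x" using N.isCont_cdf Nm_single by simp
  then show ?thesis unfolding Qfun_cdf[abs_def] by (intro continuous_intros)
qed

lemma Qfun_mono: "x \<le> y \<Longrightarrow> Qfun y \<le> Qfun x"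
  unfolding Qfun_cdf using N.cdf_nondecreasing[of x y] by simp

lemma Qfun_nonneg: "0 \<le> Qfun x" by (simp add: Qfun_measure)
lemma Qfun_le1: "Qfun x \<le> 1" by (simp add: Qfun_measure)

lemma Qfun_top: "(Qfun \<longlongrightarrow> 0) at_top"
proof -
  have "((\<lambda>x. 1 - cdf Nm x) \<longlongrightarrow> 1 - 1) at_top"
    by (intro tendsto_intros N.cdf_lim_at_top_prob)
  then show ?thesis unfolding Qfun_cdf[abs_def] by simp
qed

lemma Qfun_bot: "(Qfun \<longlongrightarrow> 1) at_bot"
proof -
  have "((\<lambda>x. 1 - cdf Nm x) \<longlongrightarrow> 1 - 0) at_bot"
    by (intro tendsto_intros N.cdf_lim_at_bot)
  then show ?thesis unfolding Qfun_cdf[abs_def] by simp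
qed

lemma Qfun_strict:
  assumes "x < y" shows "Qfun y < Qfun x"
proof -
  define c where "c = (1 / sqrt (2 * pi)) * exp (- (x^2 + y^2) / 2)"
  have cpos: "c > 0" unfolding c_def by simp
  have "ennreal c * ennreal (y - x) = (\<integral>\<^sup>+ t. ennreal c * indicator {x<..y} t \<partial>lborel)"
    using assms by (simp add: nn_integral_cmult_indicator)
  also have "\<dots> \<le> (\<integral>\<^sup>+ t. ennreal (normal_density 0 1 t) * indicator {x<..y} t \<partial>lborel)"
  proof (rule nn_integral_mono)
    fix t
    show "ennreal c * indicator {x<..y} t \<le> ennreal (normal_density 0 1 t) * indicator {x<..y} t"
    proof (cases "t \<in> {x<..y}")
      case True
      then have "t^2 \<le> x^2 + y^2"
        by (cases "t \<ge> 0") (auto intro!: power_mono simp: abs_le_square_iff[symmetric] add_increasing add_increasing2)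
      then have "c \<le> normal_density 0 1 t"
        unfolding c_def std_normal_density_def by (auto simp: divide_simps)
      then show ?thesis using True by (simp add: ennreal_leI)
    qed simp
  qed
  also have "\<dots> = emeasure Nm {x<..y}"
    by (rule emeasure_density[symmetric]) auto
  finally have "ennreal (c * (y - x)) \<le> ennreal (measure Nm {x<..y})"
    using cpos assms by (simp add: N.emeasure_eq_measure ennreal_mult)
  then have "c * (y - x) \<le> measure Nm {x<..y}"
    by (subst (asm) ennreal_le_iff) auto
  moreover have "c * (y - x) > 0" using cpos assms by simp
  moreover have "measure Nm {x<..y} = cdf Nm y - cdf Nm x"
    using N.cdf_diff_eq[OF assms] by simp
  ultimately show ?thesis unfolding Qfun_cdf by simp
qed


lemma Qinv_eq:
  assumes "0 < e" "e < 1" shows "Qfun (Qinv e) = e"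
proof -
  have "eventually (\<lambda>x. Qfun x > e) at_bot"
    using order_tendstoD(1)[OF Qfun_bot, of e] assms by simp
  then obtain a where a: "Qfun a > e" by (auto simp: eventually_at_bot_linorder)
  have "eventually (\<lambda>x. Qfun x < e) at_top"
    using order_tendstoD(2)[OF Qfun_top, of e] assms by simp
  then obtain b where b: "Qfun b < e" by (auto simp: eventually_at_top_linorder)
  have ab: "a \<le> b"
  proof (rule ccontr)
    assume "\<not> a \<le> b" then have "Qfun a \<le> Qfun b" by (intro Qfun_mono) simp
    with a b show False by simp
  qed
  have "\<exists>x. a \<le> x \<and> x \<le> b \<and> Qfun x = e"
    using IVT2[of Qfun b e a] ab a b Qfun_cont by auto
  then obtain x where x: "Qfun x = e" by blast
  have "(THE x. Qfun x = e) = x"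
  proof (rule the_equality)
    fix y assume "Qfun y = e"
    then show "y = x" using x Qfun_strict by (metis linorder_neqE_linordered_idom less_irrefl)
  qed (rule x)
  then show ?thesis unfolding Qinv_def using x by simp
qed

lemma Qfun_tail:
  assumes x: "0 \<le> x" shows "Qfun x \<le> exp (- (x^2) / 2)"
proof -
  have "emeasure Nm {x..} = (\<integral>\<^sup>+ t. ennreal (normal_density 0 1 t) * indicator {x..} t \<partial>lborel)"
    by (rule emeasure_density) auto
  also have "\<dots> = (\<integral>\<^sup>+ s. ennreal (normal_density 0 1 (x + s)) * indicator {x..} (x + s) \<partial>lborel)"
    using nn_integral_real_affine[of "\<lambda>t. ennreal (normal_density 0 1 t) * indicator {x..} t" 1 x] by simp
  also have "\<dots> \<le> (\<integral>\<^sup>+ s. ennreal (exp (- (x^2) / 2)) * ennreal (normal_density 0 1 s) \<partial>lborel)"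
  proof (rule nn_integral_mono)
    fix s
    show "ennreal (normal_density 0 1 (x + s)) * indicator {x..} (x + s)
        \<le> ennreal (exp (- (x^2) / 2)) * ennreal (normal_density 0 1 s)"
    proof (cases "0 \<le> s")
      case True
      have "(x + s)^2 \<ge> x^2 + s^2" using True x by (simp add: power2_eq_square algebra_simps)
      then have "exp (- ((x + s)^2) / 2) \<le> exp (- (x^2) / 2) * exp (- (s^2) / 2)"
        by (simp add: exp_add[symmetric])
      then have "normal_density 0 1 (x + s) \<le> exp (- (x^2) / 2) * normal_density 0 1 s"
        unfolding std_normal_density_def by (simp add: divide_simps)
      then show ?thesis using True by (simp add: ennreal_mult[symmetric] ennreal_leI)
    qed simp
  qed
  also have "\<dots> = ennreal (exp (- (x^2) / 2)) * (\<integral>\<^sup>+ s. ennreal (normal_density 0 1 s) \<partial>lborel)"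
    by (rule nn_integral_cmult) auto
  also have "(\<integral>\<^sup>+ s. ennreal (normal_density 0 1 s) \<partial>lborel) = emeasure Nm UNIV"
    by (subst emeasure_density) auto
  also have "\<dots> = 1" using N.emeasure_space_1 by simp
  finally have "ennreal (measure Nm {x..}) \<le> ennreal (exp (- (x^2) / 2))"
    by (simp add: N.emeasure_eq_measure)
  then show ?thesis by (simp add: Qfun_measure)
qed


lemma measure_D_ge:
  assumes "\<sigma> > 0"
  shows "measure (density lborel (normal_density 0 \<sigma>)) {a..} = Qfun (a / \<sigma>)"
proof -
  have "emeasure (density lborel (normal_density 0 \<bar>\<sigma>\<bar>)) {a..} = emeasure Nm {x. \<sigma> * x \<in> {a..}}"
    by (rule scale_D) (use assms in auto)
  also have "{x. \<sigma> * x \<in> {a..}} = {a / \<sigma>..}"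
    using assms by (auto simp: field_simps)
  finally show ?thesis using assms by (simp add: measure_def Qfun_measure)
qed

lemma measure_D_le:
  assumes "\<sigma> > 0"
  shows "measure (density lborel (normal_density 0 \<sigma>)) {..a} = Qfun (- a / \<sigma>)"
proof -
  have "emeasure (density lborel (normal_density 0 \<bar>-\<sigma>\<bar>)) {..a} = emeasure Nm {x. (-\<sigma>) * x \<in> {..a}}"
    by (rule scale_D) (use assms in auto)
  also have "{x. (-\<sigma>) * x \<in> {..a}} = {- a / \<sigma>..}"
    using assms by (auto simp: field_simps)
  finally show ?thesis using assms by (simp add: measure_def Qfun_measure)
qed

lemma err_bound:
  assumes s: "\<sigma> > 0" and M: "M \<ge> 1"
  shows "ppm_err \<sigma> M \<xi> \<Upsilon> \<le> (real M - 1) * Qfun (\<Upsilon> / \<sigma>) + Qfun ((\<xi> - \<Upsilon>) / \<sigma>)"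
proof -
  define D where "D = density lborel (normal_density 0 \<sigma>)"
  define P where "P = PiM {1..M} (\<lambda>_. D)"
  interpret D: prob_space D unfolding D_def by (rule prob_space_normal_density) fact
  interpret P: product_prob_space "\<lambda>_. D" "{1..M}" by unfold_locales
  interpret Q: prob_space P unfolding P_def by (intro prob_space_PiM D.prob_space_axioms)
  have sD[simp]: "sets D = sets borel" by (simp add: D_def)
  have comp: "measure P {z \<in> space P. z k \<in> A} = measure D A" if "k \<in> {1..M}" "A \<in> sets borel" for k A
    using P.emeasure_PiM_Collect_single[of k A] that unfolding P_def measure_def by simp
  have mc: "{z \<in> space P. z k \<in> A} \<in> sets P" if "k \<in> {1..M}" "A \<in> sets borel" for k A
  proof -
    have "{x \<in> space D. x \<in> A} = A" by (simp add: D_def)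
    then have "{x \<in> space D. x \<in> A} \<in> sets D" using that(2) by simp
    then show ?thesis unfolding P_def by (rule sets_Collect_single'[OF that(1)])
  qed
  define B where "B = (real M - 1) * Qfun (\<Upsilon> / \<sigma>) + Qfun ((\<xi> - \<Upsilon>) / \<sigma>)"
  have bnd: "measure P {z \<in> space P. ppm_dec M (quant \<Upsilon> (ppm_cw \<xi> m) z) \<noteq> Some m} \<le> B"
    if m: "m \<in> {1..M}" for m
  proof -
    define F where "F = {z \<in> space P. z m \<in> {..\<Upsilon> - \<xi>}}"
    define G where "G = (\<lambda>k. {z \<in> space P. z k \<in> {\<Upsilon>..}})"
    have sub: "{z \<in> space P. ppm_dec M (quant \<Upsilon> (ppm_cw \<xi> m) z) \<noteq> Some m}
        \<subseteq> F \<union> (\<Union>k\<in>{1..M} - {m}. G k)"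
    proof
      fix z assume z: "z \<in> {z \<in> space P. ppm_dec M (quant \<Upsilon> (ppm_cw \<xi> m) z) \<noteq> Some m}"
      show "z \<in> F \<union> (\<Union>k\<in>{1..M} - {m}. G k)"
      proof (rule ccontr)
        assume nz: "z \<notin> F \<union> (\<Union>k\<in>{1..M} - {m}. G k)"
        define y where "y = quant \<Upsilon> (ppm_cw \<xi> m) z"
        have ym: "y m = 1" using nz z unfolding y_def F_def quant_def ppm_cw_def by auto
        have yk: "\<forall>k\<in>{1..M}. k \<noteq> m \<longrightarrow> y k = -1"
          using nz z unfolding y_def G_def quant_def ppm_cw_def by auto
        have P1: "m \<in> {1..M} \<and> y m = 1 \<and> (\<forall>k\<in>{1..M}. k \<noteq> m \<longrightarrow> y k = -1)" using m ym yk by blast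
        have sm: "(SOME m'. m' \<in> {1..M} \<and> y m' = 1 \<and> (\<forall>k\<in>{1..M}. k \<noteq> m' \<longrightarrow> y k = -1)) = m"
        proof (rule some_equality)
          fix m' assume "m' \<in> {1..M} \<and> y m' = 1 \<and> (\<forall>k\<in>{1..M}. k \<noteq> m' \<longrightarrow> y k = -1)"
          then show "m' = m" using m ym by force
        qed (rule P1)
        have ex: "\<exists>m\<in>{1..M}. y m = 1 \<and> (\<forall>k\<in>{1..M}. k \<noteq> m \<longrightarrow> y k = -1)" using P1 by blast
        have "ppm_dec M y = Some m" unfolding ppm_dec_def by (simp only: ex if_True sm)
        then show False using z unfolding y_def by simp
      qed
    qed
    have mF: "F \<in> sets P" unfolding F_def by (rule mc[OF m]) simp
    have mG: "G k \<in> sets P" if "k \<in> {1..M} - {m}" for k unfolding G_def using that by (intro mc) auto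
    have mU: "(\<Union>k\<in>{1..M} - {m}. G k) \<in> sets P" by (rule sets.finite_UN) (use mG in auto)
    have "measure P {z \<in> space P. ppm_dec M (quant \<Upsilon> (ppm_cw \<xi> m) z) \<noteq> Some m}
        \<le> measure P (F \<union> (\<Union>k\<in>{1..M} - {m}. G k))"
      by (rule Q.finite_measure_mono[OF sub]) (use mF mU in auto)
    also have "\<dots> \<le> measure P F + measure P (\<Union>k\<in>{1..M} - {m}. G k)"
      by (rule measure_subadditive) (use mF mU in auto)
    also have "measure P (\<Union>k\<in>{1..M} - {m}. G k) \<le> (\<Sum>k\<in>{1..M} - {m}. measure P (G k))"
      by (rule measure_subadditive_finite) (auto simp: image_subset_iff Q.emeasure_finite simp del: Diff_iff intro!: mG)
    also have "(\<Sum>k\<in>{1..M} - {m}. measure P (G k)) = (\<Sum>k\<in>{1..M} - {m}. Qfun (\<Upsilon> / \<sigma>))"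
    proof (rule sum.cong[OF refl])
      fix k assume "k \<in> {1..M} - {m}"
      then have "measure P (G k) = measure D {\<Upsilon>..}" unfolding G_def by (intro comp) auto
      then show "measure P (G k) = Qfun (\<Upsilon> / \<sigma>)" by (simp add: measure_D_ge[OF s, folded D_def])
    qed
    also have "\<dots> = (real M - 1) * Qfun (\<Upsilon> / \<sigma>)"
      using m M by (simp add: card_Diff_singleton of_nat_diff)
    also have "measure P F = Qfun ((\<xi> - \<Upsilon>) / \<sigma>)"
    proof -
      have "measure P F = measure D {..\<Upsilon> - \<xi>}" unfolding F_def using m by (intro comp) auto
      also have "\<dots> = Qfun (- (\<Upsilon> - \<xi>) / \<sigma>)" by (rule measure_D_le[OF s, folded D_def])
      finally show ?thesis by simp
    qed
    finally show ?thesis unfolding B_def by simp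
  qed
  have "ppm_err \<sigma> M \<xi> \<Upsilon> = (1 / real M) * (\<Sum>m\<in>{1..M}.
        measure P {z \<in> space P. ppm_dec M (quant \<Upsilon> (ppm_cw \<xi> m) z) \<noteq> Some m})"
    unfolding ppm_err_def noise_def P_def D_def ..
  also have "\<dots> \<le> (1 / real M) * (\<Sum>m\<in>{1..M}. B)"
    by (intro mult_left_mono sum_mono bnd) auto
  also have "\<dots> = B" using M by simp
  finally show ?thesis unfolding B_def .
qed


lemma xi_props:
  assumes "0 < R" "M \<ge> 2"
  shows "ppm_xi R M > 0" "(ppm_xi R M)^2 = ln (real M) / R"
proof -
  have "ln (real M) > 0" using assms by simp
  then show "ppm_xi R M > 0" "(ppm_xi R M)^2 = ln (real M) / R"
    using assms unfolding ppm_xi_def by auto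
qed

lemma xi_top:
  assumes "0 < R" shows "filterlim (ppm_xi R) at_top sequentially"
proof -
  have l1: "filterlim (\<lambda>M. ln (real M)) at_top sequentially"
    by (rule filterlim_compose[OF ln_at_top filterlim_real_sequentially])
  have "filterlim (\<lambda>M. (1 / R) * ln (real M)) at_top sequentially"
    using filterlim_tendsto_pos_mult_at_top[OF tendsto_const[of "1/R"] _ l1] assms by simp
  then have "filterlim (\<lambda>M. sqrt ((1 / R) * ln (real M))) at_top sequentially"
    by (rule filterlim_compose[OF sqrt_at_top])
  then show ?thesis unfolding ppm_xi_def[abs_def] by simp
qed

lemma tail_sum:
  assumes s: "\<sigma> > 0" and R: "0 < R" and th: "0 < \<theta>" and Rth: "R < \<theta>^2 / (2 * \<sigma>^2)"
  shows "(\<lambda>M. (real M - 1) * Qfun (\<theta> * ppm_xi R M / \<sigma>)) \<longlonglongrightarrow> 0"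
proof -
  define k where "k = \<theta>^2 / (2 * \<sigma>^2 * R) - 1"
  have kpos: "k > 0" using Rth s R unfolding k_def by (simp add: field_simps)
  have lim: "(\<lambda>M. real M powr (- k)) \<longlonglongrightarrow> 0"
    by (rule tendsto_neg_powr) (use kpos filterlim_real_sequentially in auto)
  have ev: "eventually (\<lambda>M. norm ((real M - 1) * Qfun (\<theta> * ppm_xi R M / \<sigma>)) \<le> real M powr (- k)) sequentially"
    using eventually_ge_at_top[of 2]
  proof (rule eventually_mono)
    fix M :: nat assume M: "M \<ge> 2"
    define x where "x = ppm_xi R M"
    have xp: "x > 0" and x2: "x^2 = ln (real M) / R" using xi_props[OF R M] by (auto simp: x_def)
    have e: "- ((\<theta> * x / \<sigma>)^2) / 2 = - ((k + 1) * ln (real M))"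
      using x2 s R unfolding k_def by (simp add: power_mult_distrib power_divide field_simps)
    have "(real M - 1) * Qfun (\<theta> * x / \<sigma>) \<le> real M * exp (- ((\<theta> * x / \<sigma>)^2) / 2)"
      by (intro mult_mono Qfun_tail) (use M xp th s Qfun_nonneg in auto)
    also have "\<dots> = real M * exp (- ((k + 1) * ln (real M)))" by (simp only: e)
    also have "\<dots> = exp (ln (real M)) * exp (- ((k + 1) * ln (real M)))"
      using M by simp
    also have "\<dots> = exp (- k * ln (real M))" by (simp add: exp_add[symmetric] algebra_simps)
    also have "\<dots> = real M powr (- k)" using M by (simp add: powr_def)
    finally show "norm ((real M - 1) * Qfun (\<theta> * ppm_xi R M / \<sigma>)) \<le> real M powr (- k)"
      using M Qfun_nonneg by (simp add: x_def)
  qed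
  show ?thesis by (rule Lim_null_comparison[OF ev lim])
qed


lemma theta_ex:
  fixes \<sigma> R :: real
  assumes s: "\<sigma> > 0" and R: "0 < R" "R < 1 / (2 * \<sigma>^2)"
  shows "\<exists>\<theta>. 0 < \<theta> \<and> \<theta> < 1 \<and> R < \<theta>^2 / (2 * \<sigma>^2)"
proof -
  define r where "r = sqrt (2 * \<sigma>^2 * R)"
  have r0: "0 < r" using s R unfolding r_def by simp
  have "2 * \<sigma>^2 * R < 1" using R s by (simp add: field_simps)
  then have r1: "r < 1" unfolding r_def by (metis real_sqrt_less_iff real_sqrt_one)
  define \<theta> where "\<theta> = (1 + r) / 2"
  have "r < \<theta>" using r1 unfolding \<theta>_def by simp
  then have "r^2 < \<theta>^2" using r0 by (intro power_strict_mono) auto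
  moreover have "r^2 = 2 * \<sigma>^2 * R" unfolding r_def using s R by simp
  ultimately have "R < \<theta>^2 / (2 * \<sigma>^2)" using s by (simp add: field_simps)
  moreover have "0 < \<theta>" "\<theta> < 1" using r0 r1 unfolding \<theta>_def by auto
  ultimately show ?thesis by blast
qed

lemma err_nonneg: "0 \<le> ppm_err \<sigma> M \<xi> \<Upsilon>"
  unfolding ppm_err_def by (intro mult_nonneg_nonneg sum_nonneg) auto

lemma Q_lim_xi:
  assumes s: "\<sigma> > 0" and R: "0 < R" and c: "0 < c"
  shows "(\<lambda>M. Qfun (c * ppm_xi R M / \<sigma>)) \<longlonglongrightarrow> 0"
proof -
  have "filterlim (\<lambda>M. (c / \<sigma>) * ppm_xi R M) at_top sequentially"
    using filterlim_tendsto_pos_mult_at_top[OF tendsto_const[of "c/\<sigma>"] _ xi_top[OF R]] s c by simp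
  then have "(\<lambda>M. Qfun ((c / \<sigma>) * ppm_xi R M)) \<longlonglongrightarrow> 0"
    by (rule filterlim_compose[OF Qfun_top])
  then show ?thesis by simp
qed

lemma part1_lem:
  assumes s: "\<sigma> > 0" and Qq: "Qfun q = \<epsilon>" and that: "M \<ge> 2"
  shows "ppm_err \<sigma> M (ppm_xi Rd M) (ppm_xi Rd M - \<sigma> * q)
      \<le> (real M - 1) * Qfun ((ppm_xi Rd M - \<sigma> * q) / \<sigma>) + \<epsilon>"
proof -
  have "ppm_err \<sigma> M (ppm_xi Rd M) (ppm_xi Rd M - \<sigma> * q)
    \<le> (real M - 1) * Qfun ((ppm_xi Rd M - \<sigma> * q) / \<sigma>) + Qfun ((ppm_xi Rd M - (ppm_xi Rd M - \<sigma> * q)) / \<sigma>)"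
    by (rule err_bound) (use s that in auto)
  also have "(ppm_xi Rd M - (ppm_xi Rd M - \<sigma> * q)) / \<sigma> = q" using s by simp
  finally show ?thesis using Qq by simp
qed

theorem mainTheorem2:
  fixes \<sigma> Rd \<epsilon> :: real
  assumes "\<sigma> > 0" and "0 < Rd" and "Rd < 1 / (2 * \<sigma>^2)" and "0 < \<epsilon>" and "\<epsilon> < 1"
  shows "(\<forall>M::nat. M \<ge> 2 \<longrightarrow>
            ppm_err \<sigma> M (ppm_xi Rd M) (ppm_xi Rd M - \<sigma> * Qinv \<epsilon>)
              \<le> (real M - 1) * Qfun ((ppm_xi Rd M - \<sigma> * Qinv \<epsilon>) / \<sigma>) + \<epsilon>)
       \<and> limsup (\<lambda>M. ereal (ppm_err \<sigma> M (ppm_xi Rd M) (ppm_xi Rd M - \<sigma> * Qinv \<epsilon>))) \<le> ereal \<epsilon>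
       \<and> (\<forall>R. 0 < R \<and> R < 1 / (2 * \<sigma>^2) \<longrightarrow> ppm_achievable \<sigma> R)"
proof (intro conjI allI impI)
  note s = assms(1)
  define q where "q = Qinv \<epsilon>"
  have Qq: "Qfun q = \<epsilon>" unfolding q_def by (rule Qinv_eq) (use assms in auto)
  fix M :: nat assume "M \<ge> 2"
  then show "ppm_err \<sigma> M (ppm_xi Rd M) (ppm_xi Rd M - \<sigma> * Qinv \<epsilon>)
              \<le> (real M - 1) * Qfun ((ppm_xi Rd M - \<sigma> * Qinv \<epsilon>) / \<sigma>) + \<epsilon>"
    using part1_lem[OF s Qq] unfolding q_def by blast
next
  note s = assms(1)
  define q where "q = Qinv \<epsilon>"
  have Qq: "Qfun q = \<epsilon>" unfolding q_def by (rule Qinv_eq) (use assms in auto)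
  obtain \<theta> where th: "0 < \<theta>" "\<theta> < 1" "Rd < \<theta>^2 / (2 * \<sigma>^2)"
    using theta_ex[OF s assms(2,3)] by blast
  have ev1: "eventually (\<lambda>M. (1 - \<theta>) * ppm_xi Rd M \<ge> \<sigma> * q) sequentially"
  proof -
    have "filterlim (\<lambda>M. (1 - \<theta>) * ppm_xi Rd M) at_top sequentially"
      using filterlim_tendsto_pos_mult_at_top[OF tendsto_const[of "1 - \<theta>"] _ xi_top[OF assms(2)]] th by simp
    then show ?thesis by (simp add: filterlim_at_top)
  qed
  have ev: "eventually (\<lambda>M. ereal (ppm_err \<sigma> M (ppm_xi Rd M) (ppm_xi Rd M - \<sigma> * q))
      \<le> ereal ((real M - 1) * Qfun (\<theta> * ppm_xi Rd M / \<sigma>) + \<epsilon>)) sequentially"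
    using eventually_conj[OF ev1 eventually_ge_at_top[of 2]]
  proof (rule eventually_mono)
    fix M :: nat assume M: "\<sigma> * q \<le> (1 - \<theta>) * ppm_xi Rd M \<and> 2 \<le> M"
    have Qm: "Qfun ((ppm_xi Rd M - \<sigma> * q) / \<sigma>) \<le> Qfun (\<theta> * ppm_xi Rd M / \<sigma>)"
      by (rule Qfun_mono) (use M s in \<open>simp add: divide_right_mono algebra_simps\<close>)
    have mm: "(real M - 1) * Qfun ((ppm_xi Rd M - \<sigma> * q) / \<sigma>) \<le> (real M - 1) * Qfun (\<theta> * ppm_xi Rd M / \<sigma>)"
      by (rule mult_left_mono[OF Qm]) (use M in simp)
    have p1: "ppm_err \<sigma> M (ppm_xi Rd M) (ppm_xi Rd M - \<sigma> * q)
      \<le> (real M - 1) * Qfun ((ppm_xi Rd M - \<sigma> * q) / \<sigma>) + \<epsilon>"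
      by (rule part1_lem[OF s Qq]) (use M in simp)
    from p1 mm show "ereal (ppm_err \<sigma> M (ppm_xi Rd M) (ppm_xi Rd M - \<sigma> * q))
      \<le> ereal ((real M - 1) * Qfun (\<theta> * ppm_xi Rd M / \<sigma>) + \<epsilon>)"
      by simp
  qed
  have lim: "(\<lambda>M. ereal ((real M - 1) * Qfun (\<theta> * ppm_xi Rd M / \<sigma>) + \<epsilon>)) \<longlonglongrightarrow> ereal (0 + \<epsilon>)"
    by (intro tendsto_ereal tendsto_add tail_sum[OF s assms(2) th(1) th(3)] tendsto_const)
  have "limsup (\<lambda>M. ereal (ppm_err \<sigma> M (ppm_xi Rd M) (ppm_xi Rd M - \<sigma> * q)))
      \<le> limsup (\<lambda>M. ereal ((real M - 1) * Qfun (\<theta> * ppm_xi Rd M / \<sigma>) + \<epsilon>))"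
    by (rule Limsup_mono[OF ev])
  also have "\<dots> = ereal \<epsilon>" using lim_imp_Limsup[OF _ lim] by simp
  finally show "limsup (\<lambda>M. ereal (ppm_err \<sigma> M (ppm_xi Rd M) (ppm_xi Rd M - \<sigma> * Qinv \<epsilon>))) \<le> ereal \<epsilon>"
    unfolding q_def .
next
  note s = assms(1)
  fix R :: real assume R: "0 < R \<and> R < 1 / (2 * \<sigma>^2)"
  obtain \<theta> where th: "0 < \<theta>" "\<theta> < 1" "R < \<theta>^2 / (2 * \<sigma>^2)"
    using theta_ex[OF s] R by blast
  show "ppm_achievable \<sigma> R"
    unfolding ppm_achievable_def
  proof (intro allI impI)
    fix \<epsilon>' :: real assume "\<epsilon>' > 0"
    show "\<exists>\<xi>s \<Upsilon>s. (\<forall>M\<ge>2. \<xi>s M > 0 \<and> ln (real M) / (\<xi>s M)^2 > R - \<epsilon>')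
        \<and> filterlim (\<lambda>M. (\<xi>s M)^2) at_top sequentially
        \<and> (\<lambda>M. ppm_err \<sigma> M (\<xi>s M) (\<Upsilon>s M)) \<longlonglongrightarrow> 0"
    proof (rule exI[of _ "ppm_xi R"], rule exI[of _ "\<lambda>M. \<theta> * ppm_xi R M"], intro conjI)
    show "\<forall>M\<ge>2. ppm_xi R M > 0 \<and> ln (real M) / (ppm_xi R M)^2 > R - \<epsilon>'"
    proof (intro allI impI conjI)
      fix M :: nat assume "M \<ge> 2"
      then show "ppm_xi R M > 0" using xi_props R by blast
      have "ln (real M) > 0" using \<open>M \<ge> 2\<close> by simp
      then have "ln (real M) / (ppm_xi R M)^2 = R" using xi_props(2)[of R M] \<open>M \<ge> 2\<close> R by simp
      then show "ln (real M) / (ppm_xi R M)^2 > R - \<epsilon>'" using \<open>\<epsilon>' > 0\<close> by simp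
    qed
    show "filterlim (\<lambda>M. (ppm_xi R M)^2) at_top sequentially"
      by (rule filterlim_pow_at_top) (use xi_top R in auto)
    have lim: "(\<lambda>M. (real M - 1) * Qfun (\<theta> * ppm_xi R M / \<sigma>) + Qfun ((1 - \<theta>) * ppm_xi R M / \<sigma>)) \<longlonglongrightarrow> 0 + 0"
      by (intro tendsto_add tail_sum[OF s _ th(1) th(3)] Q_lim_xi[OF s]) (use R th in auto)
    have ev: "eventually (\<lambda>M. norm (ppm_err \<sigma> M (ppm_xi R M) (\<theta> * ppm_xi R M))
        \<le> (real M - 1) * Qfun (\<theta> * ppm_xi R M / \<sigma>) + Qfun ((1 - \<theta>) * ppm_xi R M / \<sigma>)) sequentially"
      using eventually_ge_at_top[of 2]
    proof (rule eventually_mono)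
      fix M :: nat assume M: "M \<ge> 2"
      have "ppm_err \<sigma> M (ppm_xi R M) (\<theta> * ppm_xi R M)
          \<le> (real M - 1) * Qfun (\<theta> * ppm_xi R M / \<sigma>) + Qfun ((ppm_xi R M - \<theta> * ppm_xi R M) / \<sigma>)"
        by (rule err_bound) (use s M in auto)
      also have "ppm_xi R M - \<theta> * ppm_xi R M = (1 - \<theta>) * ppm_xi R M" by (simp add: algebra_simps)
      finally show "norm (ppm_err \<sigma> M (ppm_xi R M) (\<theta> * ppm_xi R M))
        \<le> (real M - 1) * Qfun (\<theta> * ppm_xi R M / \<sigma>) + Qfun ((1 - \<theta>) * ppm_xi R M / \<sigma>)"
        using err_nonneg by simp
    qed
    show "(\<lambda>M. ppm_err \<sigma> M (ppm_xi R M) (\<theta> * ppm_xi R M)) \<longlonglongrightarrow> 0"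
      using Lim_null_comparison[OF ev] lim by simp
  qed
  qed
qed

end
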